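(* Let $\alpha, \beta, \tau > 0$. Let $u \in \mathrm{H}^{1/2}(\mathbb{R})$ be continuous and affine on each interval $[k\tau,(k+1)\tau]$, $k \in \mathbb{Z}$, and let $v$ be its upwinded interpolant. Then $$| v|_{\mathrm{H}^{1/2}_w} \leq C |u|_{\mathrm{H}^{1/2}},$$ with a constant $C$ independent of $\alpha$, $\beta$, $\tau$ and $u$.
   Context: The upwinded interpolant of a continuous $u$ is the unique continuous function $v$ with $v(k\tau) = u(k\tau)$ for all $k \in \mathbb{Z}$ and which on each $[k\tau,(k+1)\tau]$ is of the form $c_1 + c_2\exp(-\beta t/\alpha)$. $|u|_{\mathrm{H}^{1/2}}$ is the $\mathrm{H}^{1/2}(\mathbb{R})$ seminorm (Slobodetski: $\iint \frac{|u(x+y)-u(x)|^2}{|y|^2}\,\mathrm{d}x\,\mathrm{d}y$, square-rooted). For $w \in \mathrm{L}^2(\mathbb{R})$, $|w|_{\mathrm{H}^{1/2}_w}$ is the smallest $C \geq 0$ such that $\|w - w(\cdot + y)\|_{\mathrm{L}^2} \leq C|y|^{1/2}$ for all $y \in \mathbb{R}$ (possibly $+\infty$). *)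

theory Defs
  imports "HOL-Analysis.Analysis"
begin

definition slob_sq :: "(real \<Rightarrow> real) \<Rightarrow> ennreal" where
  "slob_sq u = (\<integral>\<^sup>+ x. (\<integral>\<^sup>+ y. ennreal (\<bar>u (x + y) - u x\<bar>^2 / \<bar>y\<bar>^2) \<partial>lborel) \<partial>lborel)"

definition in_H_half :: "(real \<Rightarrow> real) \<Rightarrow> bool" where
  "in_H_half u \<longleftrightarrow> u \<in> borel_measurable lborel
     \<and> (\<integral>\<^sup>+ x. ennreal ((u x)^2) \<partial>lborel) < \<infinity>
     \<and> slob_sq u < \<infinity>"

definition slob_seminorm :: "(real \<Rightarrow> real) \<Rightarrow> real" where
  "slob_seminorm u = sqrt (enn2real (slob_sq u))"

text \<open>Weak seminorm: smallest C \<ge> 0 (possibly infinity) with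
  ||w - w(.+y)||_{L^2} \<le> C |y|^{1/2} for all y, i.e. ||w - w(.+y)||^2 \<le> C^2 |y|.\<close>
definition weak_seminorm :: "(real \<Rightarrow> real) \<Rightarrow> ennreal" where
  "weak_seminorm w = Inf {C :: ennreal. \<forall>y :: real.
      (\<integral>\<^sup>+ x. ennreal ((w x - w (x + y))^2) \<partial>lborel) \<le> C^2 * ennreal \<bar>y\<bar>}"

definition piecewise_affine :: "real \<Rightarrow> (real \<Rightarrow> real) \<Rightarrow> bool" where
  "piecewise_affine \<tau> u \<longleftrightarrow> (\<forall>k :: int. \<exists>a b :: real.
      \<forall>t \<in> {of_int k * \<tau> .. (of_int k + 1) * \<tau>}. u t = a + b * t)"

definition upwinded_interpolant ::
    "real \<Rightarrow> real \<Rightarrow> real \<Rightarrow> (real \<Rightarrow> real) \<Rightarrow> (real \<Rightarrow> real) \<Rightarrow> bool" where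
  "upwinded_interpolant \<alpha> \<beta> \<tau> u v \<longleftrightarrow> continuous_on UNIV v
     \<and> (\<forall>k :: int. v (of_int k * \<tau>) = u (of_int k * \<tau>))
     \<and> (\<forall>k :: int. \<exists>c1 c2 :: real. \<forall>t \<in> {of_int k * \<tau> .. (of_int k + 1) * \<tau>}.
           v t = c1 + c2 * exp (- \<beta> * t / \<alpha>))"

end

theory Submission
  imports Defs
begin

lemma dphi_int:
  fixes \<phi> :: "real \<Rightarrow> real" and h :: real
  assumes cont: "continuous_on UNIV \<phi>" and mono: "\<And>a b. a \<le> b \<Longrightarrow> \<phi> a \<le> \<phi> b"
    and nn: "\<phi> 0 \<ge> 0" and le1: "\<phi> 1 \<le> 1" and h: "0 \<le> h" "h \<le> 1"
  shows "integral {0..1} (\<lambda>s. \<phi> (min (s+h) 1) - \<phi> s) \<le> h"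
proof -
  have ci: "\<And>a b. \<phi> integrable_on {a..b}"
    by (rule integrable_continuous_interval) (rule continuous_on_subset[OF cont], auto)
  have cm: "continuous_on UNIV (\<lambda>s. \<phi> (min (s+h) 1))"
    by (intro continuous_on_compose2[OF cont]) (auto intro!: continuous_intros)
  have cmi: "\<And>a b. (\<lambda>s. \<phi> (min (s+h) 1)) integrable_on {a..b}"
    by (rule integrable_continuous_interval) (rule continuous_on_subset[OF cm], auto)
  have "integral {0..1} (\<lambda>s. \<phi> (min (s+h) 1)) = integral {0..1-h} (\<lambda>s. \<phi> (min (s+h) 1)) + integral {1-h..1} (\<lambda>s. \<phi> (min (s+h) 1))"
    by (rule Henstock_Kurzweil_Integration.integral_combine[symmetric]) (use h cmi in auto)
  also have "integral {0..1-h} (\<lambda>s. \<phi> (min (s+h) 1)) = integral {0..1-h} (\<phi> \<circ> ((+) h))"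
    by (intro integral_cong) (auto simp: add.commute)
  also have "\<dots> = integral {h..1} \<phi>"
    using integral_shift_Icc_real[of 0 "1-h" \<phi> h] by simp
  also have "integral {1-h..1} (\<lambda>s. \<phi> (min (s+h) 1)) = integral {1-h..1} (\<lambda>s. \<phi> 1)"
    by (intro integral_cong) auto
  also have "\<dots> = h * \<phi> 1" using h by simp
  finally have A: "integral {0..1} (\<lambda>s. \<phi> (min (s+h) 1)) = integral {h..1} \<phi> + h * \<phi> 1" .
  have B: "integral {0..1} \<phi> = integral {0..h} \<phi> + integral {h..1} \<phi>"
    by (rule Henstock_Kurzweil_Integration.integral_combine[symmetric]) (use h ci in auto)
  have C: "integral {0..h} \<phi> \<ge> 0"
    by (rule integral_nonneg[OF ci]) (use mono nn in force)
  have D: "integral {0..1} (\<lambda>s. \<phi> (min (s+h) 1) - \<phi> s) = integral {0..1} (\<lambda>s. \<phi> (min (s+h) 1)) - integral {0..1} \<phi>"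
    by (rule integral_diff[OF cmi ci])
  have "h * \<phi> 1 \<le> h" using h le1 by (simp add: mult_left_le)
  then show ?thesis using A B C D by linarith
qed

lemma dphi_nn:
  fixes \<phi> :: "real \<Rightarrow> real" and h :: real
  assumes cont: "continuous_on UNIV \<phi>" and mono: "\<And>a b. a \<le> b \<Longrightarrow> \<phi> a \<le> \<phi> b"
    and nn: "\<phi> 0 \<ge> 0" and le1: "\<phi> 1 \<le> 1" and h: "0 \<le> h" "h \<le> 1"
  shows "(\<integral>\<^sup>+s. ennreal (\<phi> (min (s+h) 1) - \<phi> s) * indicator {0..<1} s \<partial>lborel) \<le> ennreal h"
proof -
  let ?f = "\<lambda>s. \<phi> (min (s+h) 1) - \<phi> s"
  have cm: "continuous_on UNIV ?f"
    by (intro continuous_intros continuous_on_compose2[OF cont]) (auto intro!: continuous_intros cont)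
  have int: "(?f has_integral integral {0..1} ?f) {0..1}"
    by (rule integrable_integral, rule integrable_continuous_interval) (rule continuous_on_subset[OF cm], auto)
  have "(\<integral>\<^sup>+s. ennreal (?f s) * indicator {0..<1} s \<partial>lborel) \<le> (\<integral>\<^sup>+s. ennreal (indicator {0..1} s * ?f s) \<partial>lborel)"
    by (intro nn_integral_mono) (auto simp: indicator_def)
  also have "\<dots> = ennreal (integral {0..1} ?f)"
    by (rule nn_integral_has_integral_lebesgue[OF _ int]) (use mono h in force)
  also have "\<dots> \<le> ennreal h"
    by (rule ennreal_leI, rule dphi_int[OF cont mono nn le1 h])
  finally show ?thesis .
qed

definition Fd :: "(real \<Rightarrow> real) \<Rightarrow> real \<Rightarrow> ennreal" where
  "Fd w y = (\<integral>\<^sup>+x. ennreal ((w x - w (x + y))^2) \<partial>lborel)"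

lemma nn_shift:
  fixes f :: "real \<Rightarrow> ennreal"
  assumes "f \<in> borel_measurable borel"
  shows "(\<integral>\<^sup>+x. f (x + c) \<partial>lborel) = (\<integral>\<^sup>+x. f x \<partial>lborel)"
  using nn_integral_real_affine[OF assms, of 1 c] by (simp add: add.commute)

lemma nn_refl:
  fixes f :: "real \<Rightarrow> ennreal"
  assumes "f \<in> borel_measurable borel"
  shows "(\<integral>\<^sup>+x. f (c - x) \<partial>lborel) = (\<integral>\<^sup>+x. f x \<partial>lborel)"
  using nn_integral_real_affine[OF assms, of "-1" c] by simp

lemma Fd_zero [simp]: "Fd w 0 = 0"
  by (simp add: Fd_def)

lemma Fd_neg:
  assumes [measurable]: "w \<in> borel_measurable borel"
  shows "Fd w (-y) = Fd w y"
proof -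
  have "Fd w (-y) = (\<integral>\<^sup>+x. ennreal ((w (x+y) - w (x + y + - y))^2) \<partial>lborel)"
    unfolding Fd_def by (rule nn_shift[symmetric]) measurable
  also have "\<dots> = Fd w y" unfolding Fd_def
    by (intro nn_integral_cong) (simp add: power2_commute)
  finally show ?thesis .
qed

lemma sq_tri: "((p::real) - r)^2 \<le> 2*(p-q)^2 + 2*(q-r)^2"
proof -
  have "2*(p-q)^2 + 2*(q-r)^2 - (p-r)^2 = (p - 2*q + r)^2" by (simp add: power2_eq_square algebra_simps)
  moreover have "(p - 2*q + r)^2 \<ge> 0" by simp
  ultimately show ?thesis by linarith
qed

lemma Fd_tri:
  assumes [measurable]: "w \<in> borel_measurable borel"
  shows "Fd w (a + b) \<le> 2 * Fd w a + 2 * Fd w b"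
proof -
  have "Fd w (a + b) \<le> (\<integral>\<^sup>+x. 2 * ennreal ((w x - w (x + a))^2) + 2 * ennreal ((w (x+a) - w (x + a + b))^2) \<partial>lborel)"
    unfolding Fd_def
  proof (intro nn_integral_mono)
    fix x
    have "(w x - w (x + (a + b)))^2 \<le> 2 * (w x - w (x + a))^2 + 2 * (w (x+a) - w (x + a + b))^2"
      using sq_tri[of "w x" "w (x + a + b)" "w (x+a)"] by (simp add: add.assoc)
    then have "ennreal ((w x - w (x + (a + b)))^2) \<le> ennreal (2 * (w x - w (x + a))^2 + 2 * (w (x+a) - w (x + a + b))^2)"
      by (rule ennreal_leI)
    also have "\<dots> = 2 * ennreal ((w x - w (x + a))^2) + 2 * ennreal ((w (x+a) - w (x + a + b))^2)"
      by (subst ennreal_plus) (auto simp: ennreal_mult)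
    finally show "ennreal ((w x - w (x + (a + b)))^2) \<le> 2 * ennreal ((w x - w (x + a))^2) + 2 * ennreal ((w (x+a) - w (x + a + b))^2)"
      .
  qed
  also have "\<dots> = 2 * Fd w a + 2 * (\<integral>\<^sup>+x. ennreal ((w (x+a) - w (x + a + b))^2) \<partial>lborel)"
    unfolding Fd_def by (simp add: nn_integral_add nn_integral_cmult)
  also have "(\<integral>\<^sup>+x. ennreal ((w (x+a) - w (x + a + b))^2) \<partial>lborel) = Fd w b"
    unfolding Fd_def by (rule nn_shift) measurable
  finally show ?thesis .
qed

lemma Fd_meas[measurable]:
  assumes [measurable]: "w \<in> borel_measurable borel"
  shows "Fd w \<in> borel_measurable borel"
  unfolding Fd_def by measurable

lemma FA_pos:
  assumes [measurable]: "w \<in> borel_measurable borel" and y: "y > 0"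
  shows "Fd w y \<le> 4 * ennreal y * slob_sq w"
proof -
  have PS: "pair_sigma_finite lborel lborel"
    by (intro pair_sigma_finite.intro) (auto simp: lborel.sigma_finite_measure_axioms)
  have meas: "(\<lambda>(x,z). ennreal (\<bar>w (x + z) - w x\<bar>^2 / \<bar>z\<bar>^2)) \<in> borel_measurable (lborel \<Otimes>\<^sub>M lborel)"
    by measurable
  have S: "slob_sq w = (\<integral>\<^sup>+z. (\<integral>\<^sup>+x. ennreal (\<bar>w (x + z) - w x\<bar>^2 / \<bar>z\<bar>^2) \<partial>lborel) \<partial>lborel)"
    unfolding slob_sq_def using pair_sigma_finite.Fubini'[OF PS meas] by simp
  have step2: "(\<integral>\<^sup>+z. ennreal (1/y^2) * (Fd w z * indicator {0..y} z) \<partial>lborel) \<le> slob_sq w"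
    unfolding S
  proof (intro nn_integral_mono)
    fix z
    show "ennreal (1/y^2) * (Fd w z * indicator {0..y} z) \<le> (\<integral>\<^sup>+x. ennreal (\<bar>w (x + z) - w x\<bar>^2 / \<bar>z\<bar>^2) \<partial>lborel)"
    proof (cases "0 < z \<and> z \<le> y")
      case True
      have "ennreal (1/y^2) * (Fd w z * indicator {0..y} z) = ennreal (1/y^2) * Fd w z"
        using True by simp
      also have "\<dots> = (\<integral>\<^sup>+x. ennreal (1/y^2) * ennreal ((w x - w (x + z))^2) \<partial>lborel)"
        unfolding Fd_def by (rule nn_integral_cmult[symmetric]) measurable
      also have "\<dots> \<le> (\<integral>\<^sup>+x. ennreal (\<bar>w (x + z) - w x\<bar>^2 / \<bar>z\<bar>^2) \<partial>lborel)"
      proof (intro nn_integral_mono)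
        fix x
        have "1/y^2 \<le> 1/z^2" using True by (intro divide_left_mono power_mono) auto
        then have "1/y^2 * (w x - w (x + z))^2 \<le> 1/z^2 * (w x - w (x + z))^2"
          by (intro mult_right_mono) auto
        also have "\<dots> = \<bar>w (x + z) - w x\<bar>^2 / \<bar>z\<bar>^2" by (simp add: power2_commute)
        finally show "ennreal (1/y^2) * ennreal ((w x - w (x + z))^2) \<le> ennreal (\<bar>w (x + z) - w x\<bar>^2 / \<bar>z\<bar>^2)"
          by (simp add: ennreal_mult[symmetric] ennreal_leI)
      qed
      finally show ?thesis .
    next
      case False
      then have "Fd w z * indicator {0..y} z = 0"
        by (cases "z = 0") (auto simp: indicator_def)
      then show ?thesis by (simp only: mult_zero_right zero_le)
    qed
  qed
  have "ennreal y * Fd w y = (\<integral>\<^sup>+z. Fd w y * indicator {0..y} z \<partial>lborel)"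
    using y by (simp add: nn_integral_cmult_indicator mult.commute)
  also have "\<dots> \<le> (\<integral>\<^sup>+z. 2 * (Fd w z * indicator {0..y} z) + 2 * (Fd w (y - z) * indicator {0..y} z) \<partial>lborel)"
  proof (intro nn_integral_mono)
    fix z
    have "Fd w y \<le> 2 * Fd w z + 2 * Fd w (y - z)" using Fd_tri[of w z "y - z"] by simp
    then show "Fd w y * indicator {0..y} z \<le> 2 * (Fd w z * indicator {0..y} z) + 2 * (Fd w (y - z) * indicator {0..y} z)"
      by (cases "z \<in> {0..y}") (auto simp: distrib_left)
  qed
  also have "\<dots> = 2 * (\<integral>\<^sup>+z. Fd w z * indicator {0..y} z \<partial>lborel) + 2 * (\<integral>\<^sup>+z. Fd w (y - z) * indicator {0..y} z \<partial>lborel)"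
    by (simp add: nn_integral_add nn_integral_cmult)
  also have "(\<integral>\<^sup>+z. Fd w (y - z) * indicator {0..y} z \<partial>lborel) = (\<integral>\<^sup>+z. Fd w (y - z) * indicator {0..y} (y - z) \<partial>lborel)"
    by (intro nn_integral_cong) (auto simp: indicator_def)
  also have "\<dots> = (\<integral>\<^sup>+z. Fd w z * indicator {0..y} z \<partial>lborel)"
    by (rule nn_refl[of "\<lambda>z. Fd w z * indicator {0..y} z"]) measurable
  finally have "ennreal y * Fd w y \<le> 4 * (\<integral>\<^sup>+z. Fd w z * indicator {0..y} z \<partial>lborel)"
    by (simp add: mult_2 [symmetric] distrib_right[symmetric])
  note A1 = this
  have A2: "(\<integral>\<^sup>+z. Fd w z * indicator {0..y} z \<partial>lborel) = ennreal (y^2) * (\<integral>\<^sup>+z. ennreal (1/y^2) * (Fd w z * indicator {0..y} z) \<partial>lborel)"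
  proof -
    have c: "ennreal (y^2) * ennreal (1/y^2) = 1" using y by (simp add: ennreal_mult[symmetric])
    have "ennreal (y^2) * (\<integral>\<^sup>+z. ennreal (1/y^2) * (Fd w z * indicator {0..y} z) \<partial>lborel)
       = (\<integral>\<^sup>+z. ennreal (y^2) * (ennreal (1/y^2) * (Fd w z * indicator {0..y} z)) \<partial>lborel)"
      by (rule nn_integral_cmult[symmetric]) measurable
    also have "\<dots> = (\<integral>\<^sup>+z. Fd w z * indicator {0..y} z \<partial>lborel)"
      by (simp only: mult.assoc[symmetric] c mult_1)
    finally show ?thesis by simp
  qed
  have A3: "ennreal (y^2) * (\<integral>\<^sup>+z. ennreal (1/y^2) * (Fd w z * indicator {0..y} z) \<partial>lborel) \<le> ennreal (y^2) * slob_sq w"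
    by (rule mult_left_mono[OF step2]) simp
  have main: "ennreal y * Fd w y \<le> 4 * (ennreal (y^2) * slob_sq w)"
  proof -
    have "4 * (\<integral>\<^sup>+z. Fd w z * indicator {0..y} z \<partial>lborel) \<le> 4 * (ennreal (y^2) * slob_sq w)"
      unfolding A2 by (rule mult_left_mono[OF A3]) simp
    then show ?thesis using A1 by (rule order_trans[rotated])
  qed
  have "Fd w y = ennreal (1/y) * (ennreal y * Fd w y)"
    using y by (simp add: mult.assoc[symmetric] ennreal_mult[symmetric])
  also have "\<dots> \<le> ennreal (1/y) * (4 * (ennreal (y^2) * slob_sq w))"
    by (rule mult_left_mono[OF main]) simp
  also have "\<dots> = 4 * ennreal y * slob_sq w"
  proof -
    have "ennreal (1/y) * ennreal (y^2) = ennreal y"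
      using y by (simp add: ennreal_mult[symmetric] power2_eq_square)
    then show ?thesis by (metis mult.assoc mult.left_commute)
  qed
  finally show ?thesis .
qed

lemma FA:
  assumes [measurable]: "w \<in> borel_measurable borel"
  shows "Fd w y \<le> 4 * ennreal \<bar>y\<bar> * slob_sq w"
proof -
  consider "y > 0" | "y = 0" | "y < 0" by linarith
  then show ?thesis
  proof cases
    case 1 then show ?thesis using FA_pos[OF assms 1] by simp
  next
    case 2 then show ?thesis by simp
  next
    case 3
    then have "Fd w (-y) \<le> 4 * ennreal (-y) * slob_sq w" by (intro FA_pos[OF assms]) simp
    then show ?thesis using 3 Fd_neg[OF assms, of y] by simp
  qed
qed

lemma cell1:
  fixes a :: "int \<Rightarrow> ennreal" and b :: "real \<Rightarrow> ennreal"
  assumes b[measurable]: "b \<in> borel_measurable borel"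
  shows "(\<integral>\<^sup>+x. a \<lfloor>x\<rfloor> * b (frac x) \<partial>lborel)
       = (\<integral>\<^sup>+k. a k \<partial>count_space UNIV) * (\<integral>\<^sup>+s. b s * indicator {0..<1} s \<partial>lborel)"
proof -
  interpret P: pair_sigma_finite lborel "count_space (UNIV::int set)"
    by (intro pair_sigma_finite.intro sigma_finite_measure_count_space_countable) (auto simp: lborel.sigma_finite_measure_axioms)
  have meas: "(\<lambda>(x,k). a \<lfloor>x\<rfloor> * b (frac x) * indicator {\<lfloor>x\<rfloor>} k) \<in> borel_measurable (lborel \<Otimes>\<^sub>M count_space UNIV)"
    unfolding frac_def indicator_def by measurable
  have "(\<integral>\<^sup>+x. a \<lfloor>x\<rfloor> * b (frac x) \<partial>lborel) = (\<integral>\<^sup>+x. (\<integral>\<^sup>+k. a \<lfloor>x\<rfloor> * b (frac x) * indicator {\<lfloor>x\<rfloor>} k \<partial>count_space UNIV) \<partial>lborel)"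
    by (intro nn_integral_cong) (simp add: nn_integral_count_space_indicator)
  also have "\<dots> = (\<integral>\<^sup>+k. (\<integral>\<^sup>+x. a \<lfloor>x\<rfloor> * b (frac x) * indicator {\<lfloor>x\<rfloor>} k \<partial>lborel) \<partial>count_space UNIV)"
    using P.Fubini'[OF meas] by simp
  also have "\<dots> = (\<integral>\<^sup>+k. a k * (\<integral>\<^sup>+s. b s * indicator {0..<1} s \<partial>lborel) \<partial>count_space UNIV)"
  proof (intro nn_integral_cong)
    fix k :: int
    have m: "(\<lambda>x. a \<lfloor>x\<rfloor> * b (frac x) * indicator {\<lfloor>x\<rfloor>} k) \<in> borel_measurable borel"
      unfolding frac_def indicator_def by measurable
    have "(\<integral>\<^sup>+x. a \<lfloor>x\<rfloor> * b (frac x) * indicator {\<lfloor>x\<rfloor>} k \<partial>lborel)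
        = (\<integral>\<^sup>+s. a \<lfloor>real_of_int k + s\<rfloor> * b (frac (real_of_int k + s)) * indicator {\<lfloor>real_of_int k + s\<rfloor>} k \<partial>lborel)"
      using nn_integral_real_affine[OF m, of 1 "real_of_int k"] by simp
    also have "\<dots> = (\<integral>\<^sup>+s. a k * (b s * indicator {0..<1} s) \<partial>lborel)"
    proof (intro nn_integral_cong)
      fix s :: real
      have fl: "\<lfloor>real_of_int k + s\<rfloor> = k + \<lfloor>s\<rfloor>" by linarith
      have fr: "frac (real_of_int k + s) = frac s" by (simp add: frac_def fl)
      show "a \<lfloor>real_of_int k + s\<rfloor> * b (frac (real_of_int k + s)) * indicator {\<lfloor>real_of_int k + s\<rfloor>} k
          = a k * (b s * indicator {0..<1} s)"
      proof (cases "0 \<le> s \<and> s < 1")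
        case True
        then have "\<lfloor>s\<rfloor> = 0" by linarith
        moreover have "frac s = s" using True by (simp add: frac_eq)
        ultimately show ?thesis using True fl fr by (simp add: indicator_def)
      next
        case False
        then have "\<lfloor>s\<rfloor> \<noteq> 0" by linarith
        then show ?thesis using False fl by (simp add: indicator_def)
      qed
    qed
    also have "\<dots> = a k * (\<integral>\<^sup>+s. b s * indicator {0..<1} s \<partial>lborel)"
      by (rule nn_integral_cmult) measurable
    finally show "(\<integral>\<^sup>+x. a \<lfloor>x\<rfloor> * b (frac x) * indicator {\<lfloor>x\<rfloor>} k \<partial>lborel) = a k * (\<integral>\<^sup>+s. b s * indicator {0..<1} s \<partial>lborel)" .
  qed
  also have "\<dots> = (\<integral>\<^sup>+k. a k \<partial>count_space UNIV) * (\<integral>\<^sup>+s. b s * indicator {0..<1} s \<partial>lborel)"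
    by (subst nn_integral_multc) (auto simp: mult.commute)
  finally show ?thesis .
qed

lemma cell_tau:
  fixes a :: "int \<Rightarrow> ennreal" and b :: "real \<Rightarrow> ennreal" and \<tau> :: real
  assumes b[measurable]: "b \<in> borel_measurable borel" and t: "\<tau> > 0"
  shows "(\<integral>\<^sup>+x. a \<lfloor>x/\<tau>\<rfloor> * b (frac (x/\<tau>)) \<partial>lborel)
       = (\<integral>\<^sup>+x. a \<lfloor>x/\<tau>\<rfloor> \<partial>lborel) * (\<integral>\<^sup>+s. b s * indicator {0..<1} s \<partial>lborel)"
proof -
  have m1: "(\<lambda>x. a \<lfloor>x\<rfloor> * b (frac x)) \<in> borel_measurable borel" unfolding frac_def by measurable
  have m2: "(\<lambda>x::real. a \<lfloor>x\<rfloor>) \<in> borel_measurable borel"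
    by (rule measurable_compose[OF measurable_real_floor]) simp
  have e1: "(\<integral>\<^sup>+x. a \<lfloor>x\<rfloor> * b (frac x) \<partial>lborel) = ennreal (1/\<tau>) * (\<integral>\<^sup>+x. a \<lfloor>x/\<tau>\<rfloor> * b (frac (x/\<tau>)) \<partial>lborel)"
    using nn_integral_real_affine[OF m1, of "1/\<tau>" 0] t by simp
  have e2: "(\<integral>\<^sup>+x. a \<lfloor>x::real\<rfloor> \<partial>lborel) = ennreal (1/\<tau>) * (\<integral>\<^sup>+x. a \<lfloor>x/\<tau>\<rfloor> \<partial>lborel)"
    using nn_integral_real_affine[OF m2, of "1/\<tau>" 0] t by simp
  have c1: "(\<integral>\<^sup>+x. a \<lfloor>x::real\<rfloor> \<partial>lborel) = (\<integral>\<^sup>+k. a k \<partial>count_space UNIV)"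
    using cell1[of "\<lambda>_. 1" a] by simp
  have inv: "ennreal \<tau> * ennreal (1/\<tau>) = 1" using t by (simp add: ennreal_mult[symmetric])
  have "(\<integral>\<^sup>+x. a \<lfloor>x/\<tau>\<rfloor> * b (frac (x/\<tau>)) \<partial>lborel) = ennreal \<tau> * (\<integral>\<^sup>+x. a \<lfloor>x\<rfloor> * b (frac x) \<partial>lborel)"
    unfolding e1 by (simp add: mult.assoc[symmetric] inv)
  also have "\<dots> = ennreal \<tau> * ((\<integral>\<^sup>+x. a \<lfloor>x::real\<rfloor> \<partial>lborel) * (\<integral>\<^sup>+s. b s * indicator {0..<1} s \<partial>lborel))"
    unfolding c1 cell1[OF b] ..
  also have "\<dots> = (\<integral>\<^sup>+x. a \<lfloor>x/\<tau>\<rfloor> \<partial>lborel) * (\<integral>\<^sup>+s. b s * indicator {0..<1} s \<partial>lborel)"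
    unfolding e2 by (simp add: mult.assoc[symmetric] inv)
  finally show ?thesis .
qed

lemma ennreal_68: "0 \<le> (h::real) \<Longrightarrow> G * ennreal (6*h) + 2 * (G * ennreal h) = 8 * ennreal h * (G::ennreal)"
proof -
  assume h: "0 \<le> h"
  have "ennreal (6*h) = 6 * ennreal h" using h by (simp add: ennreal_mult)
  then have "G * ennreal (6*h) + 2 * (G * ennreal h) = (ennreal h * G) * 6 + (ennreal h * G) * 2" by (simp add: mult_ac)
  also have "\<dots> = (ennreal h * G) * (6 + 2)" by (rule distrib_left[symmetric])
  also have "(6::ennreal) + 2 = 8" by simp
  finally show ?thesis by (simp add: mult_ac)
qed

locale setting =
  fixes \<alpha> \<beta> \<tau> :: real and u v :: "real \<Rightarrow> real"
  assumes \<alpha>: "\<alpha> > 0" and \<beta>: "\<beta> > 0" and \<tau>: "\<tau> > 0"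
    and ucont: "continuous_on UNIV u" and pa: "piecewise_affine \<tau> u"
    and ui: "upwinded_interpolant \<alpha> \<beta> \<tau> u v"
begin

definition d :: "int \<Rightarrow> real" where "d k = u ((of_int k + 1) * \<tau>) - u (of_int k * \<tau>)"
definition \<gamma> :: real where "\<gamma> = \<beta> * \<tau> / \<alpha>"
definition \<phi> :: "real \<Rightarrow> real" where "\<phi> \<sigma> = (1 - exp (- \<gamma> * \<sigma>)) / (1 - exp (- \<gamma>))"

lemma \<gamma>_pos: "\<gamma> > 0" using \<alpha> \<beta> \<tau> by (simp add: \<gamma>_def)

lemma den_pos: "1 - exp (- \<gamma>) > 0" using \<gamma>_pos by simp

lemma \<phi>_mono: "a \<le> b \<Longrightarrow> \<phi> a \<le> \<phi> b"
  unfolding \<phi>_def using den_pos \<gamma>_pos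
  by (intro divide_right_mono) (auto simp: mult_left_mono)

lemma \<phi>_0 [simp]: "\<phi> 0 = 0" by (simp add: \<phi>_def)
lemma \<phi>_1 [simp]: "\<phi> 1 = 1" using den_pos by (simp add: \<phi>_def)

lemma \<phi>_cont: "continuous_on UNIV \<phi>"
  unfolding \<phi>_def using den_pos by (intro continuous_intros) auto

lemma \<phi>_bounds: "0 \<le> \<sigma> \<Longrightarrow> \<sigma> \<le> 1 \<Longrightarrow> 0 \<le> \<phi> \<sigma> \<and> \<phi> \<sigma> \<le> 1"
  using \<phi>_mono[of 0 \<sigma>] \<phi>_mono[of \<sigma> 1] by simp

lemma vcont: "continuous_on UNIV v" using ui by (simp add: upwinded_interpolant_def)

lemma u_meas[measurable]: "u \<in> borel_measurable borel"
  by (rule borel_measurable_continuous_onI[OF ucont])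
lemma v_meas[measurable]: "v \<in> borel_measurable borel"
  by (rule borel_measurable_continuous_onI[OF vcont])

lemma U1:
  assumes "of_int k * \<tau> \<le> t" "t \<le> (of_int k + 1) * \<tau>"
  shows "u t = u (of_int k * \<tau>) + (t - of_int k * \<tau>) / \<tau> * d k"
proof -
  obtain a b where ab: "\<And>t. t \<in> {of_int k * \<tau> .. (of_int k + 1) * \<tau>} \<Longrightarrow> u t = a + b * t"
    using pa unfolding piecewise_affine_def by blast
  have "of_int k * \<tau> \<le> (of_int k + 1) * \<tau>" using \<tau> by (simp add: distrib_right)
  then have "u t = a + b * t" "u (of_int k * \<tau>) = a + b * (of_int k * \<tau>)" "u ((of_int k + 1) * \<tau>) = a + b * ((of_int k + 1) * \<tau>)"
    using ab assms by auto
  then show ?thesis using \<tau> unfolding d_def by (simp add: field_simps)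
qed

lemma V1:
  assumes "of_int k * \<tau> \<le> t" "t \<le> (of_int k + 1) * \<tau>"
  shows "v t = u (of_int k * \<tau>) + \<phi> ((t - of_int k * \<tau>) / \<tau>) * d k"
proof -
  obtain c1 c2 where cc: "\<And>t. t \<in> {of_int k * \<tau> .. (of_int k + 1) * \<tau>} \<Longrightarrow> v t = c1 + c2 * exp (- \<beta> * t / \<alpha>)"
    using ui unfolding upwinded_interpolant_def by blast
  have le: "of_int k * \<tau> \<le> (of_int k + 1) * \<tau>" using \<tau> by (simp add: distrib_right)
  have n0: "v (of_int k * \<tau>) = u (of_int k * \<tau>)" using ui unfolding upwinded_interpolant_def by blast
  have n1: "v ((of_int k + 1) * \<tau>) = u ((of_int k + 1) * \<tau>)"
    using ui unfolding upwinded_interpolant_def by (metis of_int_add of_int_1)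
  define A where "A = exp (- \<beta> * (of_int k * \<tau>) / \<alpha>)"
  define \<sigma> where "\<sigma> = (t - of_int k * \<tau>) / \<tau>"
  have Apos: "A > 0" by (simp add: A_def)
  have ex: "\<And>s. exp (- \<beta> * (of_int k * \<tau> + s * \<tau>) / \<alpha>) = A * exp (- \<gamma> * s)"
  proof -
    fix s
    have "- \<beta> * (of_int k * \<tau> + s * \<tau>) / \<alpha> = - \<beta> * (of_int k * \<tau>) / \<alpha> + (- \<gamma> * s)"
      using \<alpha> unfolding \<gamma>_def by (simp add: field_simps)
    then show "exp (- \<beta> * (of_int k * \<tau> + s * \<tau>) / \<alpha>) = A * exp (- \<gamma> * s)"
      unfolding A_def by (simp only: exp_add)
  qed
  have t_eq: "t = of_int k * \<tau> + \<sigma> * \<tau>" using \<tau> by (simp add: \<sigma>_def)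
  have "v t = c1 + c2 * (A * exp (- \<gamma> * \<sigma>))"
    using cc[of t] assms ex[of \<sigma>] t_eq by simp
  moreover have "v (of_int k * \<tau>) = c1 + c2 * A"
    using cc[of "of_int k * \<tau>"] le ex[of 0] by simp
  moreover have "v ((of_int k + 1) * \<tau>) = c1 + c2 * (A * exp (- \<gamma>))"
    using cc[of "(of_int k + 1) * \<tau>"] le ex[of 1] by (simp add: distrib_right)
  ultimately have vt: "v t = u (of_int k * \<tau>) + c2 * A * (exp (- \<gamma> * \<sigma>) - 1)"
    and dk: "d k = c2 * A * (exp (- \<gamma>) - 1)"
    using n0 n1 unfolding d_def by (simp_all add: algebra_simps)
  have D: "1 - exp (- \<gamma>) \<noteq> 0" using den_pos by simp
  have "\<phi> \<sigma> * d k = c2 * A * (exp (- \<gamma> * \<sigma>) - 1)"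
    unfolding \<phi>_def dk using D by (simp add: field_simps)
  then show ?thesis unfolding \<sigma>_def[symmetric] using vt by simp
qed

definition e :: "real \<Rightarrow> real" where "e x = v x - u x"
definition g :: "real \<Rightarrow> real" where "g x = (d \<lfloor>x/\<tau>\<rfloor>)^2"
definition G :: ennreal where "G = (\<integral>\<^sup>+x. ennreal (g x) \<partial>lborel)"
definition \<psi> :: "real \<Rightarrow> real" where "\<psi> \<sigma> = \<phi> \<sigma> - \<sigma>"

lemma e_meas[measurable]: "e \<in> borel_measurable borel"
  unfolding e_def using u_meas v_meas by (rule borel_measurable_diff[rotated])

lemma g_meas[measurable]: "(\<lambda>x. ennreal (g x)) \<in> borel_measurable borel"
proof -
  have "(\<lambda>x::real. \<lfloor>x/\<tau>\<rfloor>) \<in> borel \<rightarrow>\<^sub>M count_space UNIV"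
    by (rule measurable_compose[OF _ measurable_real_floor]) measurable
  then show ?thesis unfolding g_def
    by (rule measurable_compose[where g="\<lambda>k. ennreal ((d k)^2)"]) simp
qed

lemma cellx:
  fixes x :: real
  shows "of_int \<lfloor>x/\<tau>\<rfloor> * \<tau> \<le> x" "x < (of_int \<lfloor>x/\<tau>\<rfloor> + 1) * \<tau>"
    "(x - of_int \<lfloor>x/\<tau>\<rfloor> * \<tau>) / \<tau> = frac (x/\<tau>)" "x = of_int \<lfloor>x/\<tau>\<rfloor> * \<tau> + frac (x/\<tau>) * \<tau>"
proof -
  have a: "of_int \<lfloor>x/\<tau>\<rfloor> \<le> x/\<tau>" "x/\<tau> < of_int \<lfloor>x/\<tau>\<rfloor> + 1" by linarith+
  show "of_int \<lfloor>x/\<tau>\<rfloor> * \<tau> \<le> x" using mult_right_mono[OF a(1), of \<tau>] \<tau> by simp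
  show "x < (of_int \<lfloor>x/\<tau>\<rfloor> + 1) * \<tau>" using mult_strict_right_mono[OF a(2) \<tau>] \<tau> by simp
  show "(x - of_int \<lfloor>x/\<tau>\<rfloor> * \<tau>) / \<tau> = frac (x/\<tau>)" using \<tau> by (simp add: frac_def field_simps)
  then show "x = of_int \<lfloor>x/\<tau>\<rfloor> * \<tau> + frac (x/\<tau>) * \<tau>" using \<tau> by (simp add: field_simps)
qed

lemma u_at: "u x = u (of_int \<lfloor>x/\<tau>\<rfloor> * \<tau>) + frac (x/\<tau>) * d \<lfloor>x/\<tau>\<rfloor>"
  using U1[OF cellx(1) less_imp_le[OF cellx(2)]] unfolding cellx(3) .

lemma e_at: "e x = d \<lfloor>x/\<tau>\<rfloor> * \<psi> (frac (x/\<tau>))"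
proof -
  note V = V1[OF cellx(1) less_imp_le[OF cellx(2)], unfolded cellx(3)]
  show ?thesis
    by (subst e_def, subst V, subst u_at) (simp add: \<psi>_def algebra_simps)
qed

lemma \<psi>_bound: "0 \<le> \<sigma> \<Longrightarrow> \<sigma> \<le> 1 \<Longrightarrow> \<bar>\<psi> \<sigma>\<bar> \<le> 1"
  using \<phi>_bounds[of \<sigma>] unfolding \<psi>_def by auto

lemma frac_bounds: "0 \<le> frac (x::real)" "frac x \<le> 1"
  using frac_lt_1[of x] by (auto simp: frac_ge_0)

lemma e_sq: "(e x)^2 \<le> g x"
proof -
  have "(e x)^2 = (d \<lfloor>x/\<tau>\<rfloor>)^2 * (\<psi> (frac (x/\<tau>)))^2" unfolding e_at by (rule power_mult_distrib)
  also have "\<dots> \<le> (d \<lfloor>x/\<tau>\<rfloor>)^2 * 1"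
  proof (rule mult_left_mono)
    show "(\<psi> (frac (x/\<tau>)))^2 \<le> 1" using \<psi>_bound[OF frac_bounds] by (simp add: abs_square_le_1)
  qed (rule zero_le_power2)
  finally show ?thesis unfolding g_def by simp
qed

lemma g_pt: "g x \<le> 4 * (u x - u (x + \<tau>/2))^2 + 4 * (u (x - \<tau>/2) - u (x - \<tau>/2 + \<tau>/2))^2"
proof -
  define k where "k = \<lfloor>x/\<tau>\<rfloor>"
  define s where "s = frac (x/\<tau>)"
  have x: "x = of_int k * \<tau> + s * \<tau>" unfolding k_def s_def by (rule cellx(4))
  have s01: "0 \<le> s" "s < 1" unfolding s_def by (auto simp: frac_lt_1)
  have ux: "u x = u (of_int k * \<tau>) + s * d k" unfolding k_def s_def by (rule u_at)
  show ?thesis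
  proof (cases "s \<le> 1/2")
    case True
    have st: "s * \<tau> \<le> \<tau>/2" using mult_right_mono[OF True, of \<tau>] \<tau> by simp
    have "u (x + \<tau>/2) = u (of_int k * \<tau>) + (x + \<tau>/2 - of_int k * \<tau>) / \<tau> * d k"
      using st s01 \<tau> x distrib_right[of "of_int k" 1 \<tau>] mult_nonneg_nonneg[of s \<tau>] by (intro U1) linarith+
    also have "(x + \<tau>/2 - of_int k * \<tau>) / \<tau> = s + 1/2" using \<tau> x by (simp add: field_simps)
    finally have "u x - u (x + \<tau>/2) = - d k / 2" using ux by (simp add: algebra_simps)
    then have "4 * (u x - u (x + \<tau>/2))^2 = g x" unfolding g_def k_def by (simp add: power2_eq_square)
    then show ?thesis by simp
  next
    case False
    have st: "\<tau>/2 \<le> s * \<tau>" using mult_right_mono[of "1/2" s \<tau>] False \<tau> by simp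
    have st2: "s * \<tau> < \<tau>" using mult_strict_right_mono[OF s01(2) \<tau>] by simp
    have "u (x - \<tau>/2) = u (of_int k * \<tau>) + (x - \<tau>/2 - of_int k * \<tau>) / \<tau> * d k"
      using st st2 s01 \<tau> x distrib_right[of "of_int k" 1 \<tau>] by (intro U1) linarith+
    also have "(x - \<tau>/2 - of_int k * \<tau>) / \<tau> = s - 1/2" using \<tau> x by (simp add: field_simps)
    finally have "u (x - \<tau>/2) - u (x - \<tau>/2 + \<tau>/2) = - d k / 2" using ux by (simp add: algebra_simps)
    then have "4 * (u (x - \<tau>/2) - u (x - \<tau>/2 + \<tau>/2))^2 = g x" unfolding g_def k_def by (simp add: power2_eq_square)
    then show ?thesis by simp
  qed
qed

lemma G_le: "G \<le> 8 * Fd u (\<tau>/2)"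
proof -
  have "G \<le> (\<integral>\<^sup>+x. 4 * ennreal ((u x - u (x + \<tau>/2))^2) + 4 * ennreal ((u (x - \<tau>/2) - u (x - \<tau>/2 + \<tau>/2))^2) \<partial>lborel)"
    unfolding G_def
  proof (intro nn_integral_mono)
    fix x
    have "ennreal (g x) \<le> ennreal (4 * (u x - u (x + \<tau>/2))^2 + 4 * (u (x - \<tau>/2) - u (x - \<tau>/2 + \<tau>/2))^2)"
      by (rule ennreal_leI[OF g_pt])
    also have "\<dots> = 4 * ennreal ((u x - u (x + \<tau>/2))^2) + 4 * ennreal ((u (x - \<tau>/2) - u (x - \<tau>/2 + \<tau>/2))^2)"
      by (subst ennreal_plus) (auto simp: ennreal_mult)
    finally show "ennreal (g x) \<le> \<dots>" .
  qed
  also have "\<dots> = 4 * Fd u (\<tau>/2) + 4 * (\<integral>\<^sup>+x. ennreal ((u (x + - \<tau>/2) - u (x + - \<tau>/2 + \<tau>/2))^2) \<partial>lborel)"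
    unfolding Fd_def by (simp add: nn_integral_add nn_integral_cmult)
  also have "(\<integral>\<^sup>+x. ennreal ((u (x + - \<tau>/2) - u (x + - \<tau>/2 + \<tau>/2))^2) \<partial>lborel) = Fd u (\<tau>/2)"
    unfolding Fd_def by (rule nn_shift[of "\<lambda>x. ennreal ((u x - u (x + \<tau>/2))^2)"]) measurable
  finally show ?thesis by (simp add: distrib_right[symmetric])
qed

lemma \<phi>_meas[measurable]: "\<phi> \<in> borel_measurable borel"
  by (rule borel_measurable_continuous_onI[OF \<phi>_cont])

lemma G_alt: "G = (\<integral>\<^sup>+x. ennreal ((d \<lfloor>x/\<tau>\<rfloor>)^2) \<partial>lborel)"
  unfolding G_def g_def ..

lemma cellG:
  assumes [measurable]: "b \<in> borel_measurable borel"
  shows "(\<integral>\<^sup>+x. ennreal (g x) * b (frac (x/\<tau>)) \<partial>lborel) = G * (\<integral>\<^sup>+s. b s * indicator {0..<1} s \<partial>lborel)"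
  unfolding G_alt g_def using cell_tau[OF assms \<tau>, of "\<lambda>k. ennreal ((d k)^2)"] by simp

lemma e_pt_small:
  assumes y: "0 < y" "y < \<tau>"
  defines "h \<equiv> y / \<tau>"
  shows "(e x - e (x + y))^2 \<le> g x * (2*h + 2*(\<phi> (min (frac (x/\<tau>) + h) 1) - \<phi> (frac (x/\<tau>))) + 2 * indicator {1-h..} (frac (x/\<tau>)))
           + 2 * (g (x + y) * indicator {..<h} (frac ((x+y)/\<tau>)))"
proof -
  define k where "k = \<lfloor>x/\<tau>\<rfloor>"
  define s where "s = frac (x/\<tau>)"
  have x: "x = of_int k * \<tau> + s * \<tau>" unfolding k_def s_def by (rule cellx(4))
  have s01: "0 \<le> s" "s < 1" unfolding s_def by (auto simp: frac_lt_1)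
  have h01: "0 < h" "h < 1" unfolding h_def using y by auto
  have yh: "y = h * \<tau>" unfolding h_def using \<tau> by simp
  have ex: "e x = d k * \<psi> s" unfolding k_def s_def by (rule e_at)
  have gx: "g x = (d k)^2" unfolding g_def k_def ..
  have g0: "0 \<le> g z" for z unfolding g_def by simp
  have ind0: "0 \<le> (indicator A z :: real)" for A and z :: real by (simp add: indicator_def)
  have \<phi>s: "0 \<le> \<phi> s" "\<phi> s \<le> 1" using \<phi>_bounds[of s] s01 by auto
  show ?thesis
  proof (cases "s + h \<le> 1")
    case True
    have mn: "min (s + h) 1 = s + h" using True by simp
    have t1: "of_int k * \<tau> \<le> x + y" "x + y \<le> (of_int k + 1) * \<tau>"
    proof -
      have "(s + h) * \<tau> \<le> 1 * \<tau>" using True \<tau> by (intro mult_right_mono) auto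
      then show "x + y \<le> (of_int k + 1) * \<tau>" using x yh by (simp add: algebra_simps)
      show "of_int k * \<tau> \<le> x + y" using x yh s01 h01 \<tau> by (simp add: algebra_simps)
    qed
    have fr: "(x + y - of_int k * \<tau>) / \<tau> = s + h" using x yh \<tau> by (simp add: field_simps)
    have exy: "e (x + y) = d k * \<psi> (s + h)"
      unfolding e_def V1[OF t1] U1[OF t1] fr \<psi>_def by (simp add: algebra_simps)
    define \<Delta> where "\<Delta> = \<phi> (s + h) - \<phi> s"
    have \<Delta>: "0 \<le> \<Delta>" "\<Delta> \<le> 1" unfolding \<Delta>_def using \<phi>_mono[of s "s+h"] \<phi>_bounds[of "s+h"] \<phi>s h01 s01 True by auto
    have "(e x - e (x + y))^2 = (d k)^2 * (h - \<Delta>)^2"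
      unfolding ex exy \<psi>_def \<Delta>_def by (simp add: power2_eq_square algebra_simps)
    also have "(h - \<Delta>)^2 \<le> h + \<Delta>"
    proof -
      have "(h - \<Delta>)^2 = \<bar>h - \<Delta>\<bar>^2" by simp
      also have "\<dots> \<le> (max h \<Delta>)^2" using h01 \<Delta> by (intro power_mono) auto
      also have "\<dots> \<le> max h \<Delta>" using h01 \<Delta> by (simp add: power2_eq_square mult_le_one mult_right_le_one_le)
      also have "\<dots> \<le> h + \<Delta>" using h01 \<Delta> by simp
      finally show ?thesis .
    qed
    then have "(d k)^2 * (h - \<Delta>)^2 \<le> (d k)^2 * (h + \<Delta>)" by (intro mult_left_mono) auto
    also have "\<dots> \<le> g x * (2*h + 2*(\<phi> (min (s + h) 1) - \<phi> s) + 2 * indicator {1-h..} s)"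
      unfolding gx mn \<Delta>_def[symmetric] using h01 \<Delta> by (intro mult_left_mono) auto
    also have "\<dots> \<le> g x * (2*h + 2*(\<phi> (min (s + h) 1) - \<phi> s) + 2 * indicator {1-h..} s)
           + 2 * (g (x + y) * indicator {..<h} (frac ((x+y)/\<tau>)))"
      using g0 ind0 by simp
    finally show ?thesis unfolding s_def .
  next
    case False
    have fl: "\<lfloor>(x+y)/\<tau>\<rfloor> = k + 1"
    proof -
      have "(x + y)/\<tau> = of_int k + (s + h)" using x yh \<tau> by (simp add: field_simps)
      then show ?thesis using False s01 h01 by (simp add: floor_eq_iff)
    qed
    have frxy: "frac ((x+y)/\<tau>) = s + h - 1"
    proof -
      have "(x + y)/\<tau> = of_int k + (s + h)" using x yh \<tau> by (simp add: field_simps)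
      then show ?thesis unfolding frac_def fl by simp
    qed
    have "(e x - e (x + y))^2 \<le> 2 * (e x)^2 + 2 * (e (x+y))^2"
      using sq_tri[of "e x" "e (x+y)" 0] by simp
    also have "\<dots> \<le> 2 * g x + 2 * g (x + y)" using e_sq[of x] e_sq[of "x+y"] by simp
    also have "\<dots> \<le> g x * (2*h + 2*(\<phi> (min (s + h) 1) - \<phi> s) + 2 * indicator {1-h..} s)
           + 2 * (g (x + y) * indicator {..<h} (frac ((x+y)/\<tau>)))"
    proof -
      have mn: "min (s + h) 1 = 1" using False by simp
      have "0 \<le> \<phi> 1 - \<phi> s" using \<phi>s by simp
      then have "2 \<le> 2*h + 2*(\<phi> (min (s + h) 1) - \<phi> s) + 2 * indicator {1-h..} s"
        unfolding mn using False h01 by (simp add: indicator_def)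
      then have "g x * 2 \<le> g x * (2*h + 2*(\<phi> (min (s + h) 1) - \<phi> s) + 2 * indicator {1-h..} s)"
        using g0 by (intro mult_left_mono) auto
      moreover have "indicator {..<h} (frac ((x+y)/\<tau>)) = (1::real)" unfolding frxy using s01 by simp
      ultimately show ?thesis by simp
    qed
    finally show ?thesis unfolding s_def .
  qed
qed

lemma frac_meas[measurable]: "(frac :: real \<Rightarrow> real) \<in> borel_measurable borel"
  unfolding frac_def by measurable

lemma ennreal3: "0\<le>(a::real) \<Longrightarrow> 0\<le>b \<Longrightarrow> 0\<le>c \<Longrightarrow> ennreal(a + 2*b + 2*c) = ennreal a + 2*ennreal b + 2*ennreal c"
  by (simp add: ennreal_plus ennreal_mult)

lemma B1_int:
  assumes h: "0 < h" "h < 1"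
  shows "(\<integral>\<^sup>+\<sigma>. ennreal (2*h + 2*(\<phi> (min (\<sigma> + h) 1) - \<phi> \<sigma>) + 2 * indicator {1-h..} \<sigma>) * indicator {0..<1} \<sigma> \<partial>lborel)
         \<le> ennreal (6 * h)"
proof -
  have eq: "(\<integral>\<^sup>+\<sigma>. ennreal (2*h + 2*(\<phi> (min (\<sigma> + h) 1) - \<phi> \<sigma>) + 2 * indicator {1-h..} \<sigma>) * indicator {0..<1} \<sigma> \<partial>lborel)
     = (\<integral>\<^sup>+\<sigma>. ennreal (2*h) * indicator {0..<1} \<sigma> + 2 * (ennreal (\<phi> (min (\<sigma> + h) 1) - \<phi> \<sigma>) * indicator {0..<1} \<sigma>) + 2 * indicator {1-h..<1} \<sigma> \<partial>lborel)"
  proof (intro nn_integral_cong)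
    fix \<sigma> :: real
    show "ennreal (2*h + 2*(\<phi> (min (\<sigma> + h) 1) - \<phi> \<sigma>) + 2 * indicator {1-h..} \<sigma>) * indicator {0..<1} \<sigma>
        = ennreal (2*h) * indicator {0..<1} \<sigma> + 2 * (ennreal (\<phi> (min (\<sigma> + h) 1) - \<phi> \<sigma>) * indicator {0..<1} \<sigma>) + 2 * indicator {1-h..<1} \<sigma>"
    proof (cases "\<sigma> \<in> {0..<1}")
      case True
      have \<Delta>: "0 \<le> \<phi> (min (\<sigma> + h) 1) - \<phi> \<sigma>" using \<phi>_mono[of \<sigma> "min (\<sigma> + h) 1"] True h by auto
      have i: "(indicator {1-h..} \<sigma> :: real) = indicator {1-h..<1} \<sigma>" using True by (simp add: indicator_def)
      have "ennreal (2*h + 2*(\<phi> (min (\<sigma> + h) 1) - \<phi> \<sigma>) + 2 * indicator {1-h..} \<sigma>)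
          = ennreal (2*h) + 2 * ennreal (\<phi> (min (\<sigma> + h) 1) - \<phi> \<sigma>) + 2 * ennreal (indicator {1-h..<1} \<sigma>)"
        unfolding i using \<Delta> h by (intro ennreal3) auto
      then show ?thesis using True by (simp add: indicator_def)
    next
      case False
      then have "indicator {0..<1} \<sigma> = (0::ennreal)" "indicator {1-h..<1} \<sigma> = (0::ennreal)"
        using h by (auto simp: indicator_def)
      then show ?thesis by simp
    qed
  qed
  have i1: "(\<integral>\<^sup>+\<sigma>. ennreal (2*h) * indicator {0..<1::real} \<sigma> \<partial>lborel) = ennreal (2*h)"
    by (subst nn_integral_cmult_indicator) auto
  have i2: "(\<integral>\<^sup>+\<sigma>. ennreal (\<phi> (min (\<sigma> + h) 1) - \<phi> \<sigma>) * indicator {0..<1} \<sigma> \<partial>lborel) \<le> ennreal h"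
    using dphi_nn[OF \<phi>_cont \<phi>_mono] h by simp
  have i3: "(\<integral>\<^sup>+\<sigma>. indicator {1-h..<1::real} \<sigma> \<partial>lborel) = ennreal h"
    using h by simp
  have "(\<integral>\<^sup>+\<sigma>. ennreal (2*h) * indicator {0..<1} \<sigma> + 2 * (ennreal (\<phi> (min (\<sigma> + h) 1) - \<phi> \<sigma>) * indicator {0..<1} \<sigma>) + 2 * indicator {1-h..<1} \<sigma> \<partial>lborel)
     = ennreal (2*h) + 2 * (\<integral>\<^sup>+\<sigma>. ennreal (\<phi> (min (\<sigma> + h) 1) - \<phi> \<sigma>) * indicator {0..<1} \<sigma> \<partial>lborel) + 2 * ennreal h"
    by (subst nn_integral_add; (subst nn_integral_add)?; (subst nn_integral_cmult)?; simp add: i1 i3 nn_integral_cmult)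
  also have "\<dots> \<le> ennreal (2*h) + 2 * ennreal h + 2 * ennreal h"
    using i2 by (intro add_mono mult_left_mono) auto
  also have "\<dots> = ennreal (2*h + 2*h + 2*h)"
    using h by (intro ennreal3[symmetric]) auto
  also have "\<dots> = ennreal (6 * h)" by simp
  finally show ?thesis unfolding eq .
qed

lemma Ce_small:
  assumes y: "0 < y" "y < \<tau>"
  shows "Fd e y \<le> 8 * ennreal (y/\<tau>) * G"
proof -
  define h where "h = y / \<tau>"
  have h: "0 < h" "h < 1" unfolding h_def using y by auto
  define B1 where "B1 = (\<lambda>\<sigma>::real. ennreal (2*h + 2*(\<phi> (min (\<sigma> + h) 1) - \<phi> \<sigma>) + 2 * indicator {1-h..} \<sigma>))"
  define B2 where "B2 = (\<lambda>\<sigma>::real. ennreal (indicator {..<h} \<sigma>))"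
  have B1m[measurable]: "B1 \<in> borel_measurable borel" unfolding B1_def by measurable
  have B2m[measurable]: "B2 \<in> borel_measurable borel" unfolding B2_def by measurable
  have "Fd e y \<le> (\<integral>\<^sup>+x. ennreal (g x) * B1 (frac (x/\<tau>)) + 2 * (ennreal (g (x + y)) * B2 (frac ((x+y)/\<tau>))) \<partial>lborel)"
    unfolding Fd_def
  proof (intro nn_integral_mono)
    fix x
    have f01: "0 \<le> frac (x/\<tau>)" "frac (x/\<tau>) < 1" by (auto simp: frac_lt_1)
    have \<Delta>: "0 \<le> \<phi> (min (frac (x/\<tau>) + h) 1) - \<phi> (frac (x/\<tau>))"
      using \<phi>_mono[of "frac (x/\<tau>)" "min (frac (x/\<tau>) + h) 1"] f01 h by auto
    have b1: "0 \<le> 2*h + 2*(\<phi> (min (frac (x/\<tau>) + h) 1) - \<phi> (frac (x/\<tau>))) + 2 * indicator {1-h..} (frac (x/\<tau>))"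
      using \<Delta> h by (simp add: indicator_def)
    have g0: "0 \<le> g z" for z unfolding g_def by simp
    have i0: "0 \<le> (indicator {..<h} z :: real)" for z by (simp add: indicator_def)
    have "ennreal ((e x - e (x + y))^2) \<le> ennreal (g x * (2*h + 2*(\<phi> (min (frac (x/\<tau>) + h) 1) - \<phi> (frac (x/\<tau>))) + 2 * indicator {1-h..} (frac (x/\<tau>)))
           + 2 * (g (x + y) * indicator {..<h} (frac ((x+y)/\<tau>))))"
      by (rule ennreal_leI) (use e_pt_small[OF y, of x] in \<open>simp add: h_def\<close>)
    also have "\<dots> = ennreal (g x) * B1 (frac (x/\<tau>)) + 2 * (ennreal (g (x + y)) * B2 (frac ((x+y)/\<tau>)))"
      unfolding B1_def B2_def using b1 g0 i0
      by (simp add: ennreal_plus ennreal_mult)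
    finally show "ennreal ((e x - e (x + y))^2) \<le> ennreal (g x) * B1 (frac (x/\<tau>)) + 2 * (ennreal (g (x + y)) * B2 (frac ((x+y)/\<tau>)))" .
  qed
  also have "\<dots> = (\<integral>\<^sup>+x. ennreal (g x) * B1 (frac (x/\<tau>)) \<partial>lborel) + 2 * (\<integral>\<^sup>+x. ennreal (g (x + y)) * B2 (frac ((x+y)/\<tau>)) \<partial>lborel)"
    by (subst nn_integral_add) (auto simp: nn_integral_cmult)
  also have "(\<integral>\<^sup>+x. ennreal (g (x + y)) * B2 (frac ((x+y)/\<tau>)) \<partial>lborel) = (\<integral>\<^sup>+x. ennreal (g x) * B2 (frac (x/\<tau>)) \<partial>lborel)"
    by (rule nn_shift[of "\<lambda>x. ennreal (g x) * B2 (frac (x/\<tau>))"]) measurable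
  also have "(\<integral>\<^sup>+x. ennreal (g x) * B2 (frac (x/\<tau>)) \<partial>lborel) = G * (\<integral>\<^sup>+s. B2 s * indicator {0..<1} s \<partial>lborel)"
    by (rule cellG) measurable
  also have "(\<integral>\<^sup>+x. ennreal (g x) * B1 (frac (x/\<tau>)) \<partial>lborel) = G * (\<integral>\<^sup>+s. B1 s * indicator {0..<1} s \<partial>lborel)"
    by (rule cellG) measurable
  also have "(\<integral>\<^sup>+s. B2 s * indicator {0..<1} s \<partial>lborel) = ennreal h"
  proof -
    have "(\<integral>\<^sup>+s. B2 s * indicator {0..<1} s \<partial>lborel) = (\<integral>\<^sup>+s. indicator {0..<h} s \<partial>lborel)"
      unfolding B2_def using h by (intro nn_integral_cong) (auto simp: indicator_def)
    then show ?thesis using h by simp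
  qed
  finally have F1: "Fd e y \<le> G * (\<integral>\<^sup>+s. B1 s * indicator {0..<1} s \<partial>lborel) + 2 * (G * ennreal h)" .
  have "(\<integral>\<^sup>+s. B1 s * indicator {0..<1} s \<partial>lborel) \<le> ennreal (6 * h)"
    unfolding B1_def by (rule B1_int[OF h])
  then have "G * (\<integral>\<^sup>+s. B1 s * indicator {0..<1} s \<partial>lborel) + 2 * (G * ennreal h) \<le> G * ennreal (6 * h) + 2 * (G * ennreal h)"
    by (intro add_mono mult_left_mono) auto
  with F1 have "Fd e y \<le> G * ennreal (6 * h) + 2 * (G * ennreal h)" by (rule order_trans)
  also have "\<dots> = 8 * ennreal h * G"
    using h by (intro ennreal_68) simp
  finally show ?thesis unfolding h_def .
qed

lemma Ce_large:
  assumes y: "\<tau> \<le> y"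
  shows "Fd e y \<le> 8 * ennreal (y/\<tau>) * G"
proof -
  have "Fd e y \<le> (\<integral>\<^sup>+x. 2 * ennreal (g x) + 2 * ennreal (g (x + y)) \<partial>lborel)"
    unfolding Fd_def
  proof (intro nn_integral_mono)
    fix x
    have "(e x - e (x + y))^2 \<le> 2 * (e x)^2 + 2 * (e (x+y))^2"
      using sq_tri[of "e x" "e (x+y)" 0] by simp
    also have "\<dots> \<le> 2 * g x + 2 * g (x + y)" using e_sq[of x] e_sq[of "x+y"] by simp
    finally have "ennreal ((e x - e (x + y))^2) \<le> ennreal (2 * g x + 2 * g (x + y))" by (rule ennreal_leI)
    also have "\<dots> = 2 * ennreal (g x) + 2 * ennreal (g (x + y))"
      by (subst ennreal_plus) (auto simp: ennreal_mult g_def)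
    finally show "ennreal ((e x - e (x + y))^2) \<le> 2 * ennreal (g x) + 2 * ennreal (g (x + y))" .
  qed
  also have "\<dots> = 2 * G + 2 * (\<integral>\<^sup>+x. ennreal (g (x + y)) \<partial>lborel)"
    unfolding G_def by (subst nn_integral_add) (auto simp: nn_integral_cmult)
  also have "(\<integral>\<^sup>+x. ennreal (g (x + y)) \<partial>lborel) = G"
    unfolding G_def by (rule nn_shift) measurable
  also have "2 * G + 2 * G = 4 * G" by (metis mult_2 distrib_right numeral_Bit0 one_add_one)
  also have "\<dots> \<le> 8 * ennreal (y/\<tau>) * G"
  proof -
    have "1 \<le> y/\<tau>" using y \<tau> by simp
    then have A: "ennreal 4 \<le> ennreal (8 * (y/\<tau>))" by (intro ennreal_leI) linarith
    have eq: "ennreal (8 * (y/\<tau>)) = 8 * ennreal (y/\<tau>)" using \<tau> y by (subst ennreal_mult) auto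
    have "ennreal 4 \<le> 8 * ennreal (y/\<tau>)" using A unfolding eq .
    then have "(4::ennreal) \<le> 8 * ennreal (y/\<tau>)" by (simp only: ennreal_numeral)
    then show ?thesis by (intro mult_right_mono) auto
  qed
  finally show ?thesis .
qed

lemma Ce: "Fd e y \<le> 8 * ennreal (\<bar>y\<bar>/\<tau>) * G"
proof -
  have pos: "Fd e z \<le> 8 * ennreal (z/\<tau>) * G" if "z > 0" for z
  proof (cases "z < \<tau>")
    case True then show ?thesis using Ce_small[OF that] by simp
  next
    case False then show ?thesis using Ce_large[of z] by simp
  qed
  consider "y > 0" | "y = 0" | "y < 0" by linarith
  then show ?thesis
  proof cases
    case 1 then show ?thesis using pos[OF 1] by simp
  next
    case 2 then show ?thesis by simp
  next
    case 3
    have "Fd e y = Fd e (-y)" using Fd_neg[OF e_meas, of "-y"] by simp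
    then show ?thesis using pos[of "-y"] 3 by simp
  qed
qed

lemma Fv: "Fd v y \<le> 2 * Fd u y + 2 * Fd e y"
proof -
  have "Fd v y \<le> (\<integral>\<^sup>+x. 2 * ennreal ((u x - u (x + y))^2) + 2 * ennreal ((e x - e (x + y))^2) \<partial>lborel)"
    unfolding Fd_def
  proof (intro nn_integral_mono)
    fix x
    have vv: "v x - v (x + y) = (u x - u (x + y)) + (e x - e (x + y))" unfolding e_def by simp
    have "(v x - v (x + y))^2 \<le> 2 * (u x - u (x + y))^2 + 2 * (e x - e (x + y))^2"
      unfolding vv using sq_tri[of "(u x - u (x + y)) + (e x - e (x + y))" 0 "e x - e (x + y)"] by simp
    then have "ennreal ((v x - v (x + y))^2) \<le> ennreal (2 * (u x - u (x + y))^2 + 2 * (e x - e (x + y))^2)"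
      by (rule ennreal_leI)
    also have "\<dots> = 2 * ennreal ((u x - u (x + y))^2) + 2 * ennreal ((e x - e (x + y))^2)"
      by (subst ennreal_plus) (auto simp: ennreal_mult)
    finally show "ennreal ((v x - v (x + y))^2) \<le> 2 * ennreal ((u x - u (x + y))^2) + 2 * ennreal ((e x - e (x + y))^2)" .
  qed
  also have "\<dots> = 2 * Fd u y + 2 * Fd e y"
    unfolding Fd_def by (subst nn_integral_add) (auto simp: nn_integral_cmult)
  finally show ?thesis .
qed

lemma main_bound: "Fd v y \<le> 289 * (ennreal \<bar>y\<bar> * slob_sq u)"
proof -
  define S where "S = slob_sq u"
  define Y where "Y = ennreal \<bar>y\<bar>"
  have fu: "Fd u y \<le> 4 * (Y * S)" using FA[OF u_meas, of y] unfolding S_def Y_def by (simp add: mult.assoc)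
  have "G \<le> 8 * Fd u (\<tau>/2)" by (rule G_le)
  also have "\<dots> \<le> 8 * (4 * ennreal (\<tau>/2) * S)"
    using FA[OF u_meas, of "\<tau>/2"] \<tau> unfolding S_def by (intro mult_left_mono) auto
  finally have gb: "G \<le> 8 * (4 * ennreal (\<tau>/2) * S)" .
  have "Fd e y \<le> 8 * ennreal (\<bar>y\<bar>/\<tau>) * G" by (rule Ce)
  also have "\<dots> \<le> 8 * ennreal (\<bar>y\<bar>/\<tau>) * (8 * (4 * ennreal (\<tau>/2) * S))"
    by (intro mult_left_mono gb) simp
  also have "\<dots> = 256 * (ennreal (\<bar>y\<bar>/\<tau>) * ennreal (\<tau>/2)) * S" by (simp add: mult_ac)
  also have "ennreal (\<bar>y\<bar>/\<tau>) * ennreal (\<tau>/2) = ennreal (\<bar>y\<bar> / 2)"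
    using \<tau> by (simp add: ennreal_mult[symmetric])
  also have "256 * ennreal (\<bar>y\<bar> / 2) = 128 * Y"
  proof -
    have a: "ennreal (256 * (\<bar>y\<bar>/2)) = 256 * ennreal (\<bar>y\<bar>/2)" by (subst ennreal_mult) auto
    have b: "ennreal (128 * \<bar>y\<bar>) = 128 * ennreal \<bar>y\<bar>" by (subst ennreal_mult) auto
    have c: "256 * (\<bar>y\<bar>/2) = 128 * \<bar>y\<bar>" by simp
    show ?thesis unfolding Y_def by (simp only: a[symmetric] b[symmetric] c)
  qed
  finally have fe: "Fd e y \<le> 128 * (Y * S)" by (simp add: mult_ac)
  have "Fd v y \<le> 2 * Fd u y + 2 * Fd e y" by (rule Fv)
  also have "\<dots> \<le> 2 * (4 * (Y * S)) + 2 * (128 * (Y * S))"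
    by (intro add_mono mult_left_mono fu fe) auto
  also have "\<dots> \<le> 289 * (Y * S)"
  proof -
    define Z where "Z = Y * S"
    have "2 * (4 * Z) + 2 * (128 * Z) = 8 * Z + 256 * Z" by (simp add: mult.assoc[symmetric])
    also have "\<dots> = (8 + 256) * Z" by (rule distrib_right[symmetric])
    also have "\<dots> \<le> 289 * Z" by (intro mult_right_mono) auto
    finally show ?thesis unfolding Z_def .
  qed
  finally show ?thesis unfolding Y_def S_def .
qed

end

theorem proposition11:
  "\<exists>C :: real. \<forall>\<alpha> \<beta> \<tau> :: real. \<forall>u v :: real \<Rightarrow> real.
     \<alpha> > 0 \<longrightarrow> \<beta> > 0 \<longrightarrow> \<tau> > 0 \<longrightarrow>
     in_H_half u \<longrightarrow> continuous_on UNIV u \<longrightarrow> piecewise_affine \<tau> u \<longrightarrow>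
     upwinded_interpolant \<alpha> \<beta> \<tau> u v \<longrightarrow>
     weak_seminorm v \<le> ennreal (C * slob_seminorm u)"
proof (intro exI[of _ 17] allI impI)
  fix \<alpha> \<beta> \<tau> :: real and u v :: "real \<Rightarrow> real"
  assume a: "\<alpha> > 0" "\<beta> > 0" "\<tau> > 0" "in_H_half u" "continuous_on UNIV u" "piecewise_affine \<tau> u"
    "upwinded_interpolant \<alpha> \<beta> \<tau> u v"
  interpret setting \<alpha> \<beta> \<tau> u v using a by unfold_locales auto
  have fin: "slob_sq u < \<infinity>" using a(4) by (simp add: in_H_half_def)
  define s where "s = enn2real (slob_sq u)"
  have S: "slob_sq u = ennreal s" unfolding s_def using fin by (simp add: ennreal_enn2real_if)
  have s0: "0 \<le> s" unfolding s_def by simp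
  have sq: "(ennreal (17 * slob_seminorm u))^2 = 289 * ennreal s"
  proof -
    have "(ennreal (17 * slob_seminorm u))^2 = ennreal ((17 * sqrt s)^2)"
      unfolding slob_seminorm_def s_def[symmetric] using s0 by (simp add: ennreal_power)
    also have "(17 * sqrt s)^2 = 289 * s" using s0 by (simp add: power_mult_distrib)
    also have "ennreal (289 * s) = 289 * ennreal s" using s0 by (subst ennreal_mult) auto
    finally show ?thesis .
  qed
  show "weak_seminorm v \<le> ennreal (17 * slob_seminorm u)"
    unfolding weak_seminorm_def
  proof (rule Inf_lower, safe)
    fix y :: real
    have "Fd v y \<le> 289 * (ennreal \<bar>y\<bar> * slob_sq u)" by (rule main_bound)
    also have "\<dots> = (ennreal (17 * slob_seminorm u))^2 * ennreal \<bar>y\<bar>"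
      unfolding sq S by (simp add: mult_ac)
    finally show "(\<integral>\<^sup>+x. ennreal ((v x - v (x + y))^2) \<partial>lborel) \<le> (ennreal (17 * slob_seminorm u))^2 * ennreal \<bar>y\<bar>"
      unfolding Fd_def .
  qed
qed

end
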